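(* Let $m$ be a positive integer and $1<n\le m$. Let $K\in C^{[m]}(I^2)$ be independent of $\kappa$, and suppose that $K_{n-1,1},K_{n-1,2}$ are less oscillatory kernels of order $n-1$. Then $J_{n,1},J_{n,2}$ are less oscillatory kernels of order $n$.
   Context: $I=[-1,1]$; $\kappa\in(1,\infty)$; functions are complex-valued; a $\kappa$-parameterized function is a family indexed by $\kappa>1$; "independent of $\kappa$" means a fixed function. $C^{[m]}(I^2)$: functions with continuous $L^{(\alpha,\beta)}=\partial_s^\alpha\partial_t^\beta L$ for $\alpha,\beta\le m$; $C^{[m]}_{\kappa,0}(I^2)$: $\kappa$-parameterized $L\in C^{[m]}(I^2)$ with $\max_{\alpha,\beta\le m}\|L^{(\alpha,\beta)}\|_\infty\le c$ for all $\kappa\ge\kappa_0$, for some $c,\kappa_0>0$. A less oscillatory kernel of order $k$ is an $L\in C^{[m]}_{\kappa,0}(I^2)$ for which there is $c_0>0$ independent of $\kappa$ with $\max_{s\in I}|L^{(\alpha,\beta)}(s,s)|\le c_0\kappa^{-(k-\alpha-\beta-1)}$ whenever $0\le\alpha+\beta+1\le k$. Recursive kernels: $K_{1,1}=K_{1,2}=K$. For $n>1$ and $\epsilon\in\{1,2\}$: $L_{n-1,\epsilon}(s,t,x)=K(s,x)K_{n-1,\epsilon}(x,t)$; $J_{n,\epsilon}(s,t)=(-1)^{\epsilon-1}\int_t^sL_{n-1,\epsilon}(s,t,x)\,dx$. Let $\mathbb V=\{(1,-1,2,t),(2,-1,2,s),(3,1,1,s),(4,1,1,t)\}$; for $(j,\tilde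 j,\epsilon_j,z)\in\mathbb V$: $Q_{n,j}(s,t)=-\tilde j\int_{\tilde j}^zL_{n-1,\epsilon_j}(s,t,x)e^{2i\tilde j\kappa x}dx$, $R_{n,j}(s,t)=\tilde je^{2i\kappa}\tilde\sigma_m[L_{n-1,\epsilon_j}(s,t,\cdot)](\tilde j)$ with $\tilde\sigma_m[u](x)=\sum_{p=0}^{m-1}\frac{(-1)^p}{(2i\tilde j\kappa)^{p+1}}u^{(p)}(x)$, and $G_{n,j}(s,t)=(Q_{n,j}(s,t)-R_{n,j}(s,t))e^{-2i\tilde j\kappa z}$. Finally $K_{n,\epsilon}=G_{n,\epsilon}+J_{n,\epsilon}+G_{n,\epsilon+2}$. *)

theory Defs
  imports "HOL-Analysis.Analysis"
begin

type_synonym kern = "real \<Rightarrow> real \<Rightarrow> complex"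
  (* a kernel on I^2 = [-1,1]^2 *)
type_synonym pkern = "real \<Rightarrow> real \<Rightarrow> real \<Rightarrow> complex"
  (* a kappa-parameterized kernel: L kappa s t *)

abbreviation Ivl :: "real set" where "Ivl \<equiv> {-1..1}"

fun dI :: "nat \<Rightarrow> (real \<Rightarrow> complex) \<Rightarrow> real \<Rightarrow> complex" where
  "dI 0 u = u"
| "dI (Suc p) u = (\<lambda>x. vector_derivative (dI p u) (at x within Ivl))"

fun dt :: "nat \<Rightarrow> kern \<Rightarrow> kern" where
  "dt 0 L = L"
| "dt (Suc b) L = (\<lambda>s t. vector_derivative (\<lambda>t'. dt b L s t') (at t within Ivl))"

fun ds :: "nat \<Rightarrow> kern \<Rightarrow> kern" where
  "ds 0 L = L"
| "ds (Suc a) L = (\<lambda>s t. vector_derivative (\<lambda>s'. ds a L s' t) (at s within Ivl))"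

definition mixed :: "nat \<Rightarrow> nat \<Rightarrow> kern \<Rightarrow> kern" where
  "mixed a b L = ds a (dt b L)"

definition Cm :: "nat \<Rightarrow> kern \<Rightarrow> bool" where
  "Cm m L \<longleftrightarrow>
     (\<forall>b<m. \<forall>s\<in>Ivl. \<forall>t\<in>Ivl.
        ((\<lambda>t'. dt b L s t') has_vector_derivative dt (Suc b) L s t) (at t within Ivl)) \<and>
     (\<forall>a<m. \<forall>b\<le>m. \<forall>s\<in>Ivl. \<forall>t\<in>Ivl.
        ((\<lambda>s'. mixed a b L s' t) has_vector_derivative mixed (Suc a) b L s t) (at s within Ivl)) \<and>
     (\<forall>a\<le>m. \<forall>b\<le>m. continuous_on (Ivl \<times> Ivl) (\<lambda>p. mixed a b L (fst p) (snd p)))"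

definition Cmk0 :: "nat \<Rightarrow> pkern \<Rightarrow> bool" where
  "Cmk0 m L \<longleftrightarrow> (\<forall>\<kappa>>1. Cm m (L \<kappa>)) \<and>
     (\<exists>c \<kappa>0. c > 0 \<and> \<kappa>0 > 0 \<and>
        (\<forall>\<kappa>. \<kappa> > 1 \<and> \<kappa> \<ge> \<kappa>0 \<longrightarrow>
           (\<forall>a\<le>m. \<forall>b\<le>m. \<forall>s\<in>Ivl. \<forall>t\<in>Ivl. norm (mixed a b (L \<kappa>) s t) \<le> c)))"

definition less_osc :: "nat \<Rightarrow> nat \<Rightarrow> pkern \<Rightarrow> bool" where
  "less_osc m k L \<longleftrightarrow> Cmk0 m L \<and>
     (\<exists>c0>0. \<forall>\<kappa>>1. \<forall>a b. a + b + 1 \<le> k \<longrightarrow>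
        (\<forall>s\<in>Ivl. norm (mixed a b (L \<kappa>) s s)
                    \<le> c0 * \<kappa> powr (- (real k - real a - real b - 1))))"

definition oint :: "real \<Rightarrow> real \<Rightarrow> (real \<Rightarrow> complex) \<Rightarrow> complex" where
  "oint a b f = (if a \<le> b then integral {a..b} f else - integral {b..a} f)"

text \<open>L_{n-1,eps}(s,t,x) = K(s,x) K_{n-1,eps}(x,t), where Kp = K_{n-1,eps}\<close>
definition Lfun :: "kern \<Rightarrow> kern \<Rightarrow> real \<Rightarrow> real \<Rightarrow> real \<Rightarrow> complex" where
  "Lfun K Kp s t x = K s x * Kp x t"

definition Jfun :: "kern \<Rightarrow> kern \<Rightarrow> nat \<Rightarrow> kern" where
  "Jfun K Kp e s t = (-1) ^ (e - 1) * oint t s (Lfun K Kp s t)"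

text \<open>Q_{n,j}, with jt = tilde j and endpoint z\<close>
definition Qfun :: "kern \<Rightarrow> kern \<Rightarrow> real \<Rightarrow> real \<Rightarrow> real \<Rightarrow> real \<Rightarrow> real \<Rightarrow> complex" where
  "Qfun K Kp \<kappa> jt z s t =
     - of_real jt * oint jt z (\<lambda>x. Lfun K Kp s t x * exp (2 * \<i> * of_real jt * of_real \<kappa> * of_real x))"

definition sigma_t :: "nat \<Rightarrow> real \<Rightarrow> real \<Rightarrow> (real \<Rightarrow> complex) \<Rightarrow> real \<Rightarrow> complex" where
  "sigma_t m \<kappa> jt u x =
     (\<Sum>p<m. (-1) ^ p / (2 * \<i> * of_real jt * of_real \<kappa>) ^ (p + 1) * dI p u x)"

definition Rfun :: "nat \<Rightarrow> kern \<Rightarrow> kern \<Rightarrow> real \<Rightarrow> real \<Rightarrow> real \<Rightarrow> real \<Rightarrow> complex" where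
  "Rfun m K Kp \<kappa> jt s t =
     of_real jt * exp (2 * \<i> * of_real \<kappa>) * sigma_t m \<kappa> jt (Lfun K Kp s t) jt"

definition Gfun :: "nat \<Rightarrow> kern \<Rightarrow> kern \<Rightarrow> real \<Rightarrow> real \<Rightarrow> real \<Rightarrow> real \<Rightarrow> real \<Rightarrow> complex" where
  "Gfun m K Kp \<kappa> jt z s t =
     (Qfun K Kp \<kappa> jt z s t - Rfun m K Kp \<kappa> jt s t) * exp (- 2 * \<i> * of_real jt * of_real \<kappa> * of_real z)"

text \<open>G_{n,j} following the table V = {(1,-1,2,t),(2,-1,2,s),(3,1,1,s),(4,1,1,t)};
  P1 = K_{n-1,1}, P2 = K_{n-1,2}.\<close>
definition Gj :: "nat \<Rightarrow> kern \<Rightarrow> kern \<Rightarrow> kern \<Rightarrow> real \<Rightarrow> nat \<Rightarrow> kern" where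
  "Gj m K P1 P2 \<kappa> j s t =
     (if j = 1 then Gfun m K P2 \<kappa> (-1) t s t
      else if j = 2 then Gfun m K P2 \<kappa> (-1) s s t
      else if j = 3 then Gfun m K P1 \<kappa> 1 s s t
      else Gfun m K P1 \<kappa> 1 t s t)"

text \<open>Recursive kernels K_{n,eps} (for fixed kappa); meaningful for n >= 1, eps in {1,2}.\<close>
fun Kn :: "kern \<Rightarrow> nat \<Rightarrow> real \<Rightarrow> nat \<Rightarrow> nat \<Rightarrow> kern" where
  "Kn K m \<kappa> 0 e = K"
| "Kn K m \<kappa> (Suc 0) e = K"
| "Kn K m \<kappa> (Suc (Suc n)) e =
     (\<lambda>s t. Gj m K (Kn K m \<kappa> (Suc n) 1) (Kn K m \<kappa> (Suc n) 2) \<kappa> e s t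
          + Jfun K (Kn K m \<kappa> (Suc n) e) e s t
          + Gj m K (Kn K m \<kappa> (Suc n) 1) (Kn K m \<kappa> (Suc n) 2) \<kappa> (e + 2) s t)"

end

theory Submission
  imports Defs
begin


lemma vd_bound:
  fixes f :: "real \<Rightarrow> complex"
  assumes "convex S" "\<And>x. x \<in> S \<Longrightarrow> (f has_vector_derivative f' x) (at x within S)"
    "\<And>x. x \<in> S \<Longrightarrow> norm (f' x) \<le> B" "x \<in> S" "y \<in> S"
  shows "norm (f x - f y) \<le> B * norm (x - y)"
proof (rule differentiable_bound[OF assms(1) _ _ assms(4,5)])
  fix x assume "x \<in> S"
  show "(f has_derivative (\<lambda>h. h *\<^sub>R f' x)) (at x within S)"
    using assms(2)[OF \<open>x\<in>S\<close>] by (simp add: has_vector_derivative_def)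
  show "onorm (\<lambda>h. h *\<^sub>R f' x) \<le> B"
    using assms(3)[OF \<open>x\<in>S\<close>] by (simp add: onorm_scaleR_left onorm_id bounded_linear_ident)
qed

lemma diag_deriv:
  fixes f fa :: "real \<Rightarrow> real \<Rightarrow> complex"
  assumes t: "t \<in> Ivl"
    and d1: "\<And>x y. x \<in> Ivl \<Longrightarrow> y \<in> Ivl \<Longrightarrow> ((\<lambda>x'. f x' y) has_vector_derivative fa x y) (at x within Ivl)"
    and c1: "continuous_on (Ivl \<times> Ivl) (\<lambda>p. fa (fst p) (snd p))"
    and d2: "((\<lambda>y. f t y) has_vector_derivative fb) (at t within Ivl)"
  shows "((\<lambda>x. f x x) has_vector_derivative (fa t t + fb)) (at t within Ivl)"
  unfolding has_vector_derivative_def has_derivative_within_alt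
proof (intro conjI allI impI)
  show "bounded_linear (\<lambda>h. h *\<^sub>R (fa t t + fb))" by (rule bounded_linear_scaleR_left)
  fix e :: real assume e: "e > 0"
  from d2[unfolded has_vector_derivative_def has_derivative_within_alt] e
  obtain da where da: "da > 0" and hda: "\<And>y. y \<in> Ivl \<Longrightarrow> norm (y - t) < da \<Longrightarrow>
      norm (f t y - f t t - (y - t) *\<^sub>R fb) \<le> e/2 * norm (y - t)"
    by (meson half_gt_zero)
  have "(t,t) \<in> Ivl \<times> Ivl" using t by auto
  from c1[unfolded continuous_on_iff, rule_format, OF this, of "e/2"] e
  obtain db where db: "db > 0" and hdb: "\<And>p. p \<in> Ivl \<times> Ivl \<Longrightarrow> dist p (t,t) < db \<Longrightarrow>
      dist (fa (fst p) (snd p)) (fa t t) < e/2" by auto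
  show "\<exists>d>0. \<forall>y\<in>Ivl. norm (y - t) < d \<longrightarrow>
      norm (f y y - f t t - (y - t) *\<^sub>R (fa t t + fb)) \<le> e * norm (y - t)"
  proof (intro exI[of _ "min da (db/2)"] conjI ballI impI)
    show "min da (db/2) > 0" using da db by simp
    fix y assume y: "y \<in> Ivl" and yd: "norm (y - t) < min da (db/2)"
    define S where "S = closed_segment t y"
    have SI: "S \<subseteq> Ivl" unfolding S_def using t y by (simp add: closed_segment_subset)
    define g where "g = (\<lambda>\<sigma>. f \<sigma> y - \<sigma> *\<^sub>R fa t t)"
    have gd: "(g has_vector_derivative (fa \<sigma> y - fa t t)) (at \<sigma> within S)" if "\<sigma> \<in> S" for \<sigma>
    proof -
      have "((\<lambda>x'. f x' y) has_vector_derivative fa \<sigma> y) (at \<sigma> within S)"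
        using d1[of \<sigma> y] that SI y has_vector_derivative_within_subset by blast
      moreover have "((\<lambda>\<sigma>. \<sigma> *\<^sub>R fa t t) has_vector_derivative fa t t) (at \<sigma> within S)"
        by (auto intro!: derivative_eq_intros)
      ultimately show ?thesis unfolding g_def by (rule has_vector_derivative_diff)
    qed
    have gb: "norm (fa \<sigma> y - fa t t) \<le> e/2" if "\<sigma> \<in> S" for \<sigma>
    proof -
      have "\<bar>\<sigma> - t\<bar> \<le> \<bar>y - t\<bar>" using that unfolding S_def
        by (auto simp: closed_segment_eq_real_ivl split: if_splits)
      hence "dist (\<sigma>, y) (t, t) \<le> \<bar>\<sigma> - t\<bar> + \<bar>y - t\<bar>"
        by (simp add: dist_Pair_Pair dist_real_def sqrt_sum_squares_le_sum_abs)
      also have "\<dots> < db" using yd \<open>\<bar>\<sigma> - t\<bar> \<le> \<bar>y - t\<bar>\<close> by simp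
      finally have "dist (fa \<sigma> y) (fa t t) < e/2" using hdb[of "(\<sigma>,y)"] that SI y by auto
      thus ?thesis by (simp add: dist_norm)
    qed
    have "norm (g y - g t) \<le> e/2 * norm (y - t)"
      by (rule vd_bound[OF _ gd gb]) (auto simp: S_def)
    hence A: "norm (f y y - f t y - (y - t) *\<^sub>R fa t t) \<le> e/2 * norm (y - t)"
      by (simp add: g_def algebra_simps)
    have B: "norm (f t y - f t t - (y - t) *\<^sub>R fb) \<le> e/2 * norm (y - t)"
      using hda y yd by auto
    have "f y y - f t t - (y - t) *\<^sub>R (fa t t + fb) =
       (f y y - f t y - (y - t) *\<^sub>R fa t t) + (f t y - f t t - (y - t) *\<^sub>R fb)"
      by (simp add: algebra_simps scaleR_add_right)
    hence "norm (f y y - f t t - (y - t) *\<^sub>R (fa t t + fb)) \<le>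
       norm (f y y - f t y - (y - t) *\<^sub>R fa t t) + norm (f t y - f t t - (y - t) *\<^sub>R fb)"
      by (metis norm_triangle_ineq)
    also have "\<dots> \<le> e * norm (y - t)" using A B by simp
    finally show "norm (f y y - f t t - (y - t) *\<^sub>R (fa t t + fb)) \<le> e * norm (y - t)" .
  qed
qed



lemma vd_unique_Ivl:
  fixes f :: "real \<Rightarrow> complex"
  assumes "x \<in> Ivl" "(f has_vector_derivative a) (at x within Ivl)"
    "(f has_vector_derivative b) (at x within Ivl)"
  shows "a = b"
  using vector_derivative_within_closed_interval[of "-1" 1 x f a] 
    vector_derivative_within_closed_interval[of "-1" 1 x f b] assms by simp

lemma schwarz_base:
  fixes h hs ht g :: "real \<Rightarrow> real \<Rightarrow> complex"
  assumes hs: "\<And>s t. s \<in> Ivl \<Longrightarrow> t \<in> Ivl \<Longrightarrow> ((\<lambda>s'. h s' t) has_vector_derivative hs s t) (at s within Ivl)"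
    and ht: "\<And>s t. s \<in> Ivl \<Longrightarrow> t \<in> Ivl \<Longrightarrow> ((\<lambda>t'. h s t') has_vector_derivative ht s t) (at t within Ivl)"
    and g: "\<And>s t. s \<in> Ivl \<Longrightarrow> t \<in> Ivl \<Longrightarrow> ((\<lambda>s'. ht s' t) has_vector_derivative g s t) (at s within Ivl)"
    and gc: "continuous_on (Ivl \<times> Ivl) (\<lambda>p. g (fst p) (snd p))"
    and s: "s \<in> Ivl" and t: "t \<in> Ivl"
  shows "((\<lambda>t'. hs s t') has_vector_derivative g s t) (at t within Ivl)"
proof -
  have E: "hs s \<tau> = hs s (-1) + integral {-1..\<tau>} (g s)" if \<tau>: "\<tau> \<in> Ivl" for \<tau>
  proof -
    have sub: "{-1..\<tau>} \<subseteq> Ivl" using \<tau> by auto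
    have F2: "(ht s' has_integral (h s' \<tau> - h s' (-1))) {-1..\<tau>}" if "s' \<in> Ivl" for s'
      by (rule fundamental_theorem_of_calculus) 
         (use \<tau> sub that in \<open>auto intro: has_vector_derivative_within_subset[OF ht]\<close>)
    have L: "((\<lambda>s'. integral (cbox (-1) \<tau>) (ht s')) has_vector_derivative integral (cbox (-1) \<tau>) (g s))
        (at s within Ivl)"
    proof (rule leibniz_rule_vector_derivative)
      show "\<And>x t. x \<in> Ivl \<Longrightarrow> t \<in> cbox (- 1) \<tau> \<Longrightarrow>
          ((\<lambda>x. ht x t) has_vector_derivative g x t) (at x within Ivl)"
        using g sub by auto
      show "\<And>x. x \<in> Ivl \<Longrightarrow> ht x integrable_on cbox (- 1) \<tau>" using F2 by auto
      show "continuous_on (Ivl \<times> cbox (- 1) \<tau>) (\<lambda>(x, t). g x t)"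
        by (rule continuous_on_subset[OF gc[unfolded split_beta[symmetric]]]) (use sub in auto)
    qed (use s in auto)
    have L2: "((\<lambda>s'. integral {-1..\<tau>} (ht s')) has_vector_derivative hs s \<tau> - hs s (-1))
        (at s within Ivl)"
    proof (rule has_vector_derivative_transform[where f="\<lambda>s'. h s' \<tau> - h s' (-1)"])
      show "((\<lambda>s'. h s' \<tau> - h s' (- 1)) has_vector_derivative hs s \<tau> - hs s (- 1)) (at s within Ivl)"
        by (rule has_vector_derivative_diff; rule hs) (use s \<tau> in auto)
      show "\<And>x. x \<in> Ivl \<Longrightarrow> integral {- 1..\<tau>} (ht x) = h x \<tau> - h x (- 1)"
        using F2 by (simp add: integral_unique)
    qed (use s in auto)
    have "hs s \<tau> - hs s (-1) = integral {-1..\<tau>} (g s)" using vd_unique_Ivl[OF s L2] L by simp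
    thus ?thesis by (simp add: algebra_simps)
  qed
  have gs: "continuous_on Ivl (g s)"
    by (rule continuous_on_compose2[OF gc, where f="\<lambda>y. (s,y)", simplified])
       (use s in \<open>auto intro!: continuous_intros\<close>)
  have "((\<lambda>t'. hs s (-1) + integral {-1..t'} (g s)) has_vector_derivative g s t) (at t within Ivl)"
    using integral_has_vector_derivative[OF gs t] by (auto intro!: derivative_eq_intros)
  thus ?thesis by (rule has_vector_derivative_transform[OF t E, rotated]) 
qed



lemma mixed_0: "mixed 0 b F = dt b F" by (simp add: mixed_def)
lemma mixed_00: "mixed 0 0 F = F" by (simp add: mixed_def)

lemma Cm_D1: "Cm m F \<Longrightarrow> b < m \<Longrightarrow> s \<in> Ivl \<Longrightarrow> t \<in> Ivl \<Longrightarrow>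
   ((\<lambda>t'. dt b F s t') has_vector_derivative dt (Suc b) F s t) (at t within Ivl)"
  unfolding Cm_def by blast
lemma Cm_D2: "Cm m F \<Longrightarrow> a < m \<Longrightarrow> b \<le> m \<Longrightarrow> s \<in> Ivl \<Longrightarrow> t \<in> Ivl \<Longrightarrow>
   ((\<lambda>s'. mixed a b F s' t) has_vector_derivative mixed (Suc a) b F s t) (at s within Ivl)"
  unfolding Cm_def by blast
lemma Cm_C: "Cm m F \<Longrightarrow> a \<le> m \<Longrightarrow> b \<le> m \<Longrightarrow>
   continuous_on (Ivl \<times> Ivl) (\<lambda>p. mixed a b F (fst p) (snd p))"
  unfolding Cm_def by blast

lemma Cm_schwarz:
  assumes F: "Cm m F"
  shows "a \<le> m \<Longrightarrow> b < m \<Longrightarrow> s \<in> Ivl \<Longrightarrow> t \<in> Ivl \<Longrightarrow>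
   ((\<lambda>t'. mixed a b F s t') has_vector_derivative mixed a (Suc b) F s t) (at t within Ivl)"
proof (induction a arbitrary: b s t)
  case 0
  then show ?case using Cm_D1[OF F] by (simp add: mixed_0)
next
  case (Suc a)
  show ?case
  proof (rule schwarz_base[where h="mixed a b F" and ht="mixed a (Suc b) F"])
    show "\<And>s t. s \<in> Ivl \<Longrightarrow> t \<in> Ivl \<Longrightarrow>
      ((\<lambda>s'. mixed a b F s' t) has_vector_derivative mixed (Suc a) b F s t) (at s within Ivl)"
      using Cm_D2[OF F] Suc by simp
    show "\<And>s t. s \<in> Ivl \<Longrightarrow> t \<in> Ivl \<Longrightarrow>
      ((\<lambda>t'. mixed a b F s t') has_vector_derivative mixed a (Suc b) F s t) (at t within Ivl)"
      using Suc by simp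
    show "\<And>s t. s \<in> Ivl \<Longrightarrow> t \<in> Ivl \<Longrightarrow>
      ((\<lambda>s'. mixed a (Suc b) F s' t) has_vector_derivative mixed (Suc a) (Suc b) F s t) (at s within Ivl)"
      using Cm_D2[OF F] Suc by simp
    show "continuous_on (Ivl \<times> Ivl) (\<lambda>p. mixed (Suc a) (Suc b) F (fst p) (snd p))"
      using Cm_C[OF F] Suc by simp
  qed (use Suc in auto)
qed

lemma atom_deriv:
  assumes F: "Cm m F" and x: "x \<in> Ivl" and c1: "c1 \<in> Ivl" and c2: "c2 \<in> Ivl"
    and ab: "a \<le> m" "b \<le> m" "u \<longrightarrow> a < m" "v \<longrightarrow> b < m"
  shows "((\<lambda>x. mixed a b F (if u then x else c1) (if v then x else c2)) has_vector_derivative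
      ((if u then mixed (Suc a) b F (if u then x else c1) (if v then x else c2) else 0)
     + (if v then mixed a (Suc b) F (if u then x else c1) (if v then x else c2) else 0)))
     (at x within Ivl)"
proof (cases u; cases v)
  assume u v
  have "((\<lambda>x. mixed a b F x x) has_vector_derivative mixed (Suc a) b F x x + mixed a (Suc b) F x x)
      (at x within Ivl)"
  proof (rule diag_deriv[OF x, where f="mixed a b F" and fa="mixed (Suc a) b F"])
    show "\<And>x y. x \<in> Ivl \<Longrightarrow> y \<in> Ivl \<Longrightarrow>
      ((\<lambda>x'. mixed a b F x' y) has_vector_derivative mixed (Suc a) b F x y) (at x within Ivl)"
      using Cm_D2[OF F] ab \<open>u\<close> by simp
    show "continuous_on (Ivl \<times> Ivl) (\<lambda>p. mixed (Suc a) b F (fst p) (snd p))"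
      using Cm_C[OF F] ab \<open>u\<close> by simp
    show "((\<lambda>y. mixed a b F x y) has_vector_derivative mixed a (Suc b) F x x) (at x within Ivl)"
      using Cm_schwarz[OF F] ab \<open>v\<close> x by simp
  qed
  thus ?thesis using \<open>u\<close> \<open>v\<close> by simp
next
  assume u "\<not> v"
  thus ?thesis using Cm_D2[OF F, of a b x c2] ab x c2 by simp
next
  assume "\<not> u" v
  thus ?thesis using Cm_schwarz[OF F, of a b c1 x] ab x c1 by simp
next
  assume "\<not> u" "\<not> v"
  thus ?thesis by simp
qed



lemma cont_swap:
  assumes "continuous_on (Ivl \<times> Ivl) (\<lambda>p. G (fst p) (snd p))"
  shows "continuous_on (Ivl \<times> Ivl) (\<lambda>p. G (snd p) (fst p))"
  by (rule continuous_on_compose2[OF assms, where f="\<lambda>p. (snd p, fst p)", simplified])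
     (auto intro!: continuous_intros)

lemma cont_slice1:
  assumes "continuous_on (Ivl \<times> Ivl) (\<lambda>p. G (fst p) (snd p))" "z \<in> Ivl"
  shows "continuous_on Ivl (G z)"
  by (rule continuous_on_compose2[OF assms(1), where f="\<lambda>y. (z,y)", simplified])
     (use assms(2) in \<open>auto intro!: continuous_intros\<close>)

lemma oint_eq:
  fixes f :: "real \<Rightarrow> complex"
  assumes "a \<in> Ivl" "b \<in> Ivl" "continuous_on Ivl f"
  shows "oint a b f = integral {-1..b} f - integral {-1..a} f"
proof -
  have i: "f integrable_on {-1..c}" if "c \<in> Ivl" for c
    by (rule integrable_continuous_real, rule continuous_on_subset[OF assms(3)]) (use that in auto)
  show ?thesis
  proof (cases "a \<le> b")
    case True
    have "integral {-1..a} f + integral {a..b} f = integral {-1..b} f"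
      by (rule Henstock_Kurzweil_Integration.integral_combine[where a="-1" and c=a and b=b and f=f]) (use True assms(1) i[OF assms(2)] in simp_all)
    thus ?thesis using True by (simp add: oint_def algebra_simps)
  next
    case False
    have "integral {-1..b} f + integral {b..a} f = integral {-1..a} f"
      by (rule Henstock_Kurzweil_Integration.integral_combine[where a="-1" and c=b and b=a and f=f]) (use False assms(2) i[OF assms(1)] in simp_all)
    thus ?thesis using False by (simp add: oint_def algebra_simps)
  qed
qed

lemma oint_swap: "oint a b f = - oint b a f"
  by (auto simp: oint_def)

lemma oint_same: "oint a a f = 0" by (simp add: oint_def)

lemma leib:
  fixes G Gd :: "real \<Rightarrow> real \<Rightarrow> complex"
  assumes Gc: "continuous_on (Ivl \<times> Ivl) (\<lambda>p. G (fst p) (snd p))"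
    and Gz: "\<And>z x. z \<in> Ivl \<Longrightarrow> x \<in> Ivl \<Longrightarrow> ((\<lambda>z'. G z' x) has_vector_derivative Gd z x) (at z within Ivl)"
    and Gdc: "continuous_on (Ivl \<times> Ivl) (\<lambda>p. Gd (fst p) (snd p))"
    and y: "y \<in> Ivl" and z: "z \<in> Ivl"
  shows "((\<lambda>z'. integral {-1..y} (G z')) has_vector_derivative integral {-1..y} (Gd z)) (at z within Ivl)"
proof -
  have sub: "{-1..y} \<subseteq> Ivl" using y by auto
  have "((\<lambda>z'. integral (cbox (-1) y) (G z')) has_vector_derivative integral (cbox (-1) y) (Gd z)) (at z within Ivl)"
  proof (rule leibniz_rule_vector_derivative)
    show "\<And>x t. x \<in> Ivl \<Longrightarrow> t \<in> cbox (- 1) y \<Longrightarrow> ((\<lambda>x. G x t) has_vector_derivative Gd x t) (at x within Ivl)"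
      using Gz sub by auto
    show "G x integrable_on cbox (- 1) y" if x: "x \<in> Ivl" for x
    proof -
      have "continuous_on {-1..y} (G x)" by (rule continuous_on_subset[OF cont_slice1[OF Gc x] sub])
      thus ?thesis by (simp add: integrable_continuous_real)
    qed
    show "continuous_on (Ivl \<times> cbox (- 1) y) (\<lambda>(x, t). Gd x t)"
      by (rule continuous_on_subset[OF Gdc[unfolded split_beta[symmetric]]]) (use sub in auto)
  qed (use z in auto)
  thus ?thesis by simp
qed

lemma var_limit:
  fixes G Gd :: "real \<Rightarrow> real \<Rightarrow> complex"
  assumes Gc: "continuous_on (Ivl \<times> Ivl) (\<lambda>p. G (fst p) (snd p))"
    and Gz: "\<And>z x. z \<in> Ivl \<Longrightarrow> x \<in> Ivl \<Longrightarrow> ((\<lambda>z'. G z' x) has_vector_derivative Gd z x) (at z within Ivl)"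
    and Gdc: "continuous_on (Ivl \<times> Ivl) (\<lambda>p. Gd (fst p) (snd p))"
    and y: "y \<in> Ivl" and z: "z \<in> Ivl"
  shows "((\<lambda>z'. oint y z' (G z')) has_vector_derivative (G z z + oint y z (Gd z))) (at z within Ivl)"
proof -
  have D1: "((\<lambda>x. integral {-1..x} (G x)) has_vector_derivative G z z + integral {-1..z} (Gd z)) (at z within Ivl)"
  proof (rule diag_deriv[OF z, where f="\<lambda>x y. integral {-1..x} (G y)" and fa="\<lambda>x y. G y x"])
    show "\<And>x y. x \<in> Ivl \<Longrightarrow> y \<in> Ivl \<Longrightarrow>
      ((\<lambda>x'. integral {- 1..x'} (G y)) has_vector_derivative G y x) (at x within Ivl)"
      using integral_has_vector_derivative[of "-1" 1 "G _"] cont_slice1[OF Gc] by auto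
    show "continuous_on (Ivl \<times> Ivl) (\<lambda>p. G (snd p) (fst p))" by (rule cont_swap[OF Gc])
    show "((\<lambda>y. integral {- 1..z} (G y)) has_vector_derivative integral {- 1..z} (Gd z)) (at z within Ivl)"
      by (rule leib[OF Gc Gz Gdc z z])
  qed
  note D2 = leib[OF Gc Gz Gdc y z]
  have "((\<lambda>x. integral {-1..x} (G x) - integral {-1..y} (G x)) has_vector_derivative
     G z z + integral {-1..z} (Gd z) - integral {-1..y} (Gd z)) (at z within Ivl)"
    using has_vector_derivative_diff[OF D1 D2] by (simp add: algebra_simps)
  moreover have "G z z + integral {-1..z} (Gd z) - integral {-1..y} (Gd z) = G z z + oint y z (Gd z)"
    using oint_eq[OF y z cont_slice1[OF Gdc z]] by simp
  ultimately have "((\<lambda>x. integral {-1..x} (G x) - integral {-1..y} (G x)) has_vector_derivative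
     G z z + oint y z (Gd z)) (at z within Ivl)" by simp
  thus ?thesis
    by (rule has_vector_derivative_transform[OF z, rotated])
       (use oint_eq[OF y _ cont_slice1[OF Gc]] in auto)
qed

lemma var_limit2:
  fixes G Gd :: "real \<Rightarrow> real \<Rightarrow> complex"
  assumes Gc: "continuous_on (Ivl \<times> Ivl) (\<lambda>p. G (fst p) (snd p))"
    and Gz: "\<And>z x. z \<in> Ivl \<Longrightarrow> x \<in> Ivl \<Longrightarrow> ((\<lambda>z'. G z' x) has_vector_derivative Gd z x) (at z within Ivl)"
    and Gdc: "continuous_on (Ivl \<times> Ivl) (\<lambda>p. Gd (fst p) (snd p))"
    and y: "y \<in> Ivl" and z: "z \<in> Ivl"
  shows "((\<lambda>z'. oint z' y (G z')) has_vector_derivative (- G z z + oint z y (Gd z))) (at z within Ivl)"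
proof -
  have A: "((\<lambda>z'. - oint y z' (G z')) has_vector_derivative - (G z z + oint y z (Gd z))) (at z within Ivl)"
    using has_vector_derivative_minus[OF var_limit[OF Gc Gz Gdc y z]] .
  have e1: "(\<lambda>z'. oint z' y (G z')) = (\<lambda>z'. - oint y z' (G z'))"
    by (rule ext, rule oint_swap)
  have e2: "- (G z z + oint y z (Gd z)) = - G z z + oint z y (Gd z)"
    using oint_swap[of z y "Gd z"] by simp
  show ?thesis using A unfolding e1 e2 .
qed



lemma cont_bounded:
  assumes "continuous_on (Ivl \<times> Ivl) (\<lambda>p. F (fst p) (snd p))"
  shows "\<exists>M\<ge>0. \<forall>s\<in>Ivl. \<forall>t\<in>Ivl. norm (F s t :: complex) \<le> M"
proof -
  have "compact ((\<lambda>p. F (fst p) (snd p)) ` (Ivl \<times> Ivl))"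
    by (rule compact_continuous_image[OF assms]) (simp add: compact_Times)
  then obtain M where "M > 0" "\<And>z. z \<in> (\<lambda>p. F (fst p) (snd p)) ` (Ivl \<times> Ivl) \<Longrightarrow> norm z \<le> M"
    using compact_imp_bounded bounded_pos by metis
  thus ?thesis by (intro exI[of _ M]) force
qed

lemma oint_bound:
  fixes f :: "real \<Rightarrow> complex"
  assumes a: "a \<in> Ivl" and b: "b \<in> Ivl" and c: "continuous_on Ivl f" and M: "\<And>x. x \<in> Ivl \<Longrightarrow> norm (f x) \<le> M"
  shows "norm (oint a b f) \<le> M * \<bar>b - a\<bar>"
proof -
  have gen: "norm (integral {x..y} f) \<le> M * (y - x)" if "x \<in> Ivl" "y \<in> Ivl" "x \<le> y" for x y
  proof -
    have sub: "{x..y} \<subseteq> Ivl" using that by auto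
    have "f integrable_on {x..y}"
      by (rule integrable_continuous_real, rule continuous_on_subset[OF c sub])
    hence hi: "(f has_integral integral {x..y} f) (cbox x y)" by (simp add: integrable_integral)
    have M0: "0 \<le> M" using M[of x] that norm_ge_zero order_trans by blast
    have "norm (integral {x..y} f) \<le> M * Henstock_Kurzweil_Integration.content (cbox x y)"
      by (rule has_integral_bound[OF M0 hi]) (use M sub in auto)
    thus ?thesis using that by simp
  qed
  show ?thesis
  proof (cases "a \<le> b")
    case True thus ?thesis using gen[OF a b] by (simp add: oint_def)
  next
    case False thus ?thesis using gen[OF b a] by (simp add: oint_def)
  qed
qed

lemma lip_cont:
  fixes f :: "real \<Rightarrow> 'p::metric_space \<Rightarrow> complex"
  assumes c: "\<And>y. y \<in> S \<Longrightarrow> continuous_on U (f y)"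
    and L: "\<And>y y' p. y \<in> S \<Longrightarrow> y' \<in> S \<Longrightarrow> p \<in> U \<Longrightarrow> norm (f y' p - f y p) \<le> B * \<bar>y' - y\<bar>"
  shows "continuous_on (S \<times> U) (\<lambda>q. f (fst q) (snd q))"
  unfolding continuous_on_iff
proof (intro ballI allI impI)
  fix q e assume q: "q \<in> S \<times> U" and e: "(0::real) < e"
  obtain y p where qyp: "q = (y,p)" and y: "y \<in> S" and p: "p \<in> U" using q by auto
  from c[OF y, unfolded continuous_on_iff, rule_format, OF p, of "e/2"] e
  obtain d1 where d1: "d1 > 0" "\<And>p'. p' \<in> U \<Longrightarrow> dist p' p < d1 \<Longrightarrow> dist (f y p') (f y p) < e/2"
    by auto
  define d where "d = min d1 (e / (2 * (\<bar>B\<bar> + 1)))"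
  have d: "d > 0" using d1 e by (simp add: d_def)
  show "\<exists>d>0. \<forall>x'\<in>S \<times> U. dist x' q < d \<longrightarrow> dist (f (fst x') (snd x')) (f (fst q) (snd q)) < e"
  proof (intro exI[of _ d] conjI ballI impI d)
    fix x' assume x': "x' \<in> S \<times> U" and dx: "dist x' q < d"
    obtain y' p' where x'yp: "x' = (y',p')" and y': "y' \<in> S" and p': "p' \<in> U" using x' by auto
    have dy: "\<bar>y' - y\<bar> < d" using dx dist_fst_le[of x' q] by (simp add: x'yp qyp dist_real_def)
    have dp: "dist p' p < d1" using dx dist_snd_le[of x' q] by (simp add: x'yp qyp d_def)
    have "norm (f y' p' - f y p') \<le> B * \<bar>y' - y\<bar>" by (rule L[OF y y' p'])
    also have "\<dots> \<le> \<bar>B\<bar> * \<bar>y' - y\<bar>" by (simp add: mult_right_mono)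
    also have "\<dots> \<le> \<bar>B\<bar> * (e / (2 * (\<bar>B\<bar> + 1)))"
      using dy by (intro mult_left_mono) (auto simp: d_def)
    also have "\<dots> < e/2"
    proof -
      have "\<bar>B\<bar> * (e / (2 * (\<bar>B\<bar> + 1))) = (e/2) * (\<bar>B\<bar> / (\<bar>B\<bar> + 1))" by (simp add: field_simps)
      also have "\<dots> < e/2" using e by (simp add: field_simps)
      finally show ?thesis .
    qed
    finally have A: "norm (f y' p' - f y p') < e/2" .
    have Bq: "norm (f y p' - f y p) < e/2" using d1(2)[OF p' dp] by (simp add: dist_norm)
    have "norm (f y' p' - f y p) \<le> norm (f y' p' - f y p') + norm (f y p' - f y p)"
      using norm_triangle_ineq[of "f y' p' - f y p'" "f y p' - f y p"] by simp
    thus "dist (f (fst x') (snd x')) (f (fst q) (snd q)) < e"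
      using A Bq by (simp add: x'yp qyp dist_norm)
  qed
qed

lemma IT_cont:
  fixes A B :: "real \<Rightarrow> real \<Rightarrow> complex"
  assumes Ac: "continuous_on (Ivl \<times> Ivl) (\<lambda>p. A (fst p) (snd p))"
    and Bc: "continuous_on (Ivl \<times> Ivl) (\<lambda>p. B (fst p) (snd p))"
  shows "continuous_on (Ivl \<times> Ivl) (\<lambda>p. oint (snd p) (fst p) (\<lambda>x. A (fst p) x * B x (snd p)))"
proof -
  obtain MA where MA: "MA \<ge> 0" "\<And>s t. s \<in> Ivl \<Longrightarrow> t \<in> Ivl \<Longrightarrow> norm (A s t) \<le> MA"
    using cont_bounded[OF Ac] by blast
  obtain MB where MB: "MB \<ge> 0" "\<And>s t. s \<in> Ivl \<Longrightarrow> t \<in> Ivl \<Longrightarrow> norm (B s t) \<le> MB"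
    using cont_bounded[OF Bc] by blast
  define g where "g = (\<lambda>(p::real\<times>real) x. A (fst p) x * B x (snd p))"
  define \<Phi> where "\<Phi> = (\<lambda>y p. integral {-1..y} (g p))"
  have gc: "continuous_on ((Ivl \<times> Ivl) \<times> Ivl) (\<lambda>q. g (fst q) (snd q))"
    unfolding g_def
    by (intro continuous_intros continuous_on_compose2[OF Ac, where f="\<lambda>x. (fst (fst x), snd x)", simplified]
        continuous_on_compose2[OF Bc, where f="\<lambda>x. (snd x, snd (fst x))", simplified]) auto
  have gs: "continuous_on Ivl (g p)" if "p \<in> Ivl \<times> Ivl" for p
    by (rule continuous_on_compose2[OF gc, where f="\<lambda>x. (p,x)", simplified])
       (use that in \<open>auto intro!: continuous_intros\<close>)
  have gb: "norm (g p x) \<le> MA * MB" if "p \<in> Ivl \<times> Ivl" "x \<in> Ivl" for p x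
    using that MA MB by (auto simp: g_def norm_mult intro!: mult_mono)
  have Phic: "continuous_on (Ivl \<times> (Ivl \<times> Ivl)) (\<lambda>q. \<Phi> (fst q) (snd q))"
  proof (rule lip_cont)
    fix y assume y: "y \<in> Ivl"
    have "continuous_on (Ivl \<times> Ivl) (\<lambda>p. integral (cbox (-1) y) (g p))"
      by (rule integral_continuous_on_param, rule continuous_on_subset[OF gc[unfolded split_beta[symmetric]]])
         (use y in auto)
    thus "continuous_on (Ivl \<times> Ivl) (\<Phi> y)" by (simp add: \<Phi>_def)
  next
    fix y y' p assume y: "y \<in> Ivl" and y': "y' \<in> Ivl" and p: "p \<in> Ivl \<times> Ivl"
    have "\<Phi> y' p - \<Phi> y p = oint y y' (g p)"
      using oint_eq[OF y y' gs[OF p]] by (simp add: \<Phi>_def)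
    also have "norm \<dots> \<le> MA * MB * \<bar>y' - y\<bar>"
      by (rule oint_bound[OF y y' gs[OF p]]) (use gb p in auto)
    finally show "norm (\<Phi> y' p - \<Phi> y p) \<le> MA * MB * \<bar>y' - y\<bar>" .
  qed
  have c1: "continuous_on (Ivl \<times> Ivl) (\<lambda>p. \<Phi> (fst p) p)"
    by (rule continuous_on_compose2[OF Phic, where f="\<lambda>p. (fst p, p)", simplified])
       (auto intro!: continuous_intros)
  have c2: "continuous_on (Ivl \<times> Ivl) (\<lambda>p. \<Phi> (snd p) p)"
    by (rule continuous_on_compose2[OF Phic, where f="\<lambda>p. (snd p, p)", simplified])
       (auto intro!: continuous_intros)
  have "continuous_on (Ivl \<times> Ivl) (\<lambda>p. \<Phi> (fst p) p - \<Phi> (snd p) p)"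
    by (intro continuous_intros c1 c2)
  moreover have "oint (snd p) (fst p) (\<lambda>x. A (fst p) x * B x (snd p)) = \<Phi> (fst p) p - \<Phi> (snd p) p"
    if "p \<in> Ivl \<times> Ivl" for p
    using oint_eq[of "snd p" "fst p" "g p"] gs[OF that] that by (auto simp: \<Phi>_def g_def)
  ultimately show ?thesis using continuous_on_eq by (metis (no_types, lifting))
qed



datatype mono = KP int nat nat bool bool nat nat bool bool | IT int nat nat

definition sel :: "bool \<Rightarrow> real \<Rightarrow> real \<Rightarrow> real" where "sel u s t = (if u then s else t)"

fun evm :: "kern \<Rightarrow> kern \<Rightarrow> mono \<Rightarrow> real \<Rightarrow> real \<Rightarrow> complex" where
  "evm K P (KP c a1 b1 u1 v1 a2 b2 u2 v2) s t =
     of_int c * mixed a1 b1 K (sel u1 s t) (sel v1 s t) * mixed a2 b2 P (sel u2 s t) (sel v2 s t)"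
| "evm K P (IT c a b) s t = of_int c * oint t s (\<lambda>x. mixed a 0 K s x * mixed 0 b P x t)"

definition evl :: "kern \<Rightarrow> kern \<Rightarrow> mono list \<Rightarrow> real \<Rightarrow> real \<Rightarrow> complex" where
  "evl K P es s t = (\<Sum>mo\<leftarrow>es. evm K P mo s t)"

fun dm :: "bool \<Rightarrow> mono \<Rightarrow> mono list" where
  "dm w (KP c a1 b1 u1 v1 a2 b2 u2 v2) =
     (if u1 = w then [KP c (Suc a1) b1 u1 v1 a2 b2 u2 v2] else []) @
     (if v1 = w then [KP c a1 (Suc b1) u1 v1 a2 b2 u2 v2] else []) @
     (if u2 = w then [KP c a1 b1 u1 v1 (Suc a2) b2 u2 v2] else []) @
     (if v2 = w then [KP c a1 b1 u1 v1 a2 (Suc b2) u2 v2] else [])"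
| "dm w (IT c a b) = (if w then [KP c a 0 True True 0 b True False, IT c (Suc a) b]
     else [KP (-c) a 0 True False 0 b False False, IT c a (Suc b)])"

definition dl :: "bool \<Rightarrow> mono list \<Rightarrow> mono list" where
  "dl w es = concat (map (dm w) es)"

definition su :: "bool \<Rightarrow> bool \<Rightarrow> nat \<Rightarrow> nat \<Rightarrow> nat" where
  "su u v a b = (if u then a else 0) + (if v then b else 0)"
definition tu :: "bool \<Rightarrow> bool \<Rightarrow> nat \<Rightarrow> nat \<Rightarrow> nat" where
  "tu u v a b = (if u then 0 else a) + (if v then 0 else b)"

fun validm :: "nat \<Rightarrow> nat \<Rightarrow> mono \<Rightarrow> bool" where
  "validm p q (KP c a1 b1 u1 v1 a2 b2 u2 v2) =
     (su u1 v1 a1 b1 \<le> p \<and> tu u1 v1 a1 b1 \<le> q \<and> su u2 v2 a2 b2 \<le> p \<and> tu u2 v2 a2 b2 \<le> q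
      \<and> a2 + b2 + 1 \<le> p + q)"
| "validm p q (IT c a b) = (a \<le> p \<and> b \<le> q)"

lemma evl_Nil[simp]: "evl K P [] s t = 0" by (simp add: evl_def)
lemma evl_Cons[simp]: "evl K P (mo # es) s t = evm K P mo s t + evl K P es s t" by (simp add: evl_def)
lemma evl_append[simp]: "evl K P (xs @ ys) s t = evl K P xs s t + evl K P ys s t" by (simp add: evl_def)
lemma dl_Nil[simp]: "dl w [] = []" by (simp add: dl_def)
lemma dl_Cons[simp]: "dl w (mo # es) = dm w mo @ dl w es" by (simp add: dl_def)

lemma valid_dm_s: "validm p q mo \<Longrightarrow> mo' \<in> set (dm True mo) \<Longrightarrow> validm (Suc p) q mo'"
  by (cases mo) (auto simp: su_def tu_def split: if_splits)
lemma valid_dm_t: "validm p q mo \<Longrightarrow> mo' \<in> set (dm False mo) \<Longrightarrow> validm p (Suc q) mo'"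
  by (cases mo) (auto simp: su_def tu_def split: if_splits)



lemma idx_s: "su u v a b \<le> p \<Longrightarrow> tu u v a b \<le> q \<Longrightarrow> p < m \<Longrightarrow> q \<le> m \<Longrightarrow>
   a \<le> m \<and> b \<le> m \<and> (u \<longrightarrow> a < m) \<and> (v \<longrightarrow> b < m)"
  by (auto simp: su_def tu_def split: if_splits)
lemma idx_t: "su u v a b \<le> p \<Longrightarrow> tu u v a b \<le> q \<Longrightarrow> p \<le> m \<Longrightarrow> q < m \<Longrightarrow>
   a \<le> m \<and> b \<le> m \<and> (\<not>u \<longrightarrow> a < m) \<and> (\<not>v \<longrightarrow> b < m)"
  by (auto simp: su_def tu_def split: if_splits)
lemma idx_c: "su u v a b \<le> p \<Longrightarrow> tu u v a b \<le> q \<Longrightarrow> p \<le> m \<Longrightarrow> q \<le> m \<Longrightarrow> a \<le> m \<and> b \<le> m"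
  by (auto simp: su_def tu_def split: if_splits)

lemma KP_deriv_s:
  assumes K: "Cm m K" and P: "Cm m P" and v: "validm p q (KP c a1 b1 u1 v1 a2 b2 u2 v2)"
    and pq: "p < m" "q \<le> m" and s: "s \<in> Ivl" and t: "t \<in> Ivl"
  shows "((\<lambda>s'. evm K P (KP c a1 b1 u1 v1 a2 b2 u2 v2) s' t) has_vector_derivative
          evl K P (dm True (KP c a1 b1 u1 v1 a2 b2 u2 v2)) s t) (at s within Ivl)"
proof -
  have i1: "a1 \<le> m \<and> b1 \<le> m \<and> (u1 \<longrightarrow> a1 < m) \<and> (v1 \<longrightarrow> b1 < m)"
    using v pq by (intro idx_s[of u1 v1 a1 b1 p q]) auto
  have i2: "a2 \<le> m \<and> b2 \<le> m \<and> (u2 \<longrightarrow> a2 < m) \<and> (v2 \<longrightarrow> b2 < m)"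
    using v pq by (intro idx_s[of u2 v2 a2 b2 p q]) auto
  note A = atom_deriv[OF K s t t, of a1 b1 u1 v1] and B = atom_deriv[OF P s t t, of a2 b2 u2 v2]
  have D: "((\<lambda>x. (of_int c * mixed a1 b1 K (if u1 then x else t) (if v1 then x else t))
       * mixed a2 b2 P (if u2 then x else t) (if v2 then x else t)) has_vector_derivative
     (of_int c * mixed a1 b1 K (if u1 then s else t) (if v1 then s else t)) *
       ((if u2 then mixed (Suc a2) b2 P (if u2 then s else t) (if v2 then s else t) else 0) +
        (if v2 then mixed a2 (Suc b2) P (if u2 then s else t) (if v2 then s else t) else 0))
     + (of_int c * ((if u1 then mixed (Suc a1) b1 K (if u1 then s else t) (if v1 then s else t) else 0) +
        (if v1 then mixed a1 (Suc b1) K (if u1 then s else t) (if v1 then s else t) else 0)))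
       * mixed a2 b2 P (if u2 then s else t) (if v2 then s else t)) (at s within Ivl)"
    by (rule has_vector_derivative_mult[OF has_vector_derivative_mult_right[OF A] B]) (use i1 i2 in auto)
  show ?thesis
    using D by (cases u1; cases v1; cases u2; cases v2) (simp_all add: sel_def algebra_simps)
qed

lemma KP_deriv_t:
  assumes K: "Cm m K" and P: "Cm m P" and v: "validm p q (KP c a1 b1 u1 v1 a2 b2 u2 v2)"
    and pq: "p \<le> m" "q < m" and s: "s \<in> Ivl" and t: "t \<in> Ivl"
  shows "((\<lambda>t'. evm K P (KP c a1 b1 u1 v1 a2 b2 u2 v2) s t') has_vector_derivative
          evl K P (dm False (KP c a1 b1 u1 v1 a2 b2 u2 v2)) s t) (at t within Ivl)"
proof -
  have i1: "a1 \<le> m \<and> b1 \<le> m \<and> (\<not>u1 \<longrightarrow> a1 < m) \<and> (\<not>v1 \<longrightarrow> b1 < m)"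
    using v pq by (intro idx_t[of u1 v1 a1 b1 p q]) auto
  have i2: "a2 \<le> m \<and> b2 \<le> m \<and> (\<not>u2 \<longrightarrow> a2 < m) \<and> (\<not>v2 \<longrightarrow> b2 < m)"
    using v pq by (intro idx_t[of u2 v2 a2 b2 p q]) auto
  note A = atom_deriv[OF K t s s, of a1 b1 "\<not>u1" "\<not>v1"] and B = atom_deriv[OF P t s s, of a2 b2 "\<not>u2" "\<not>v2"]
  have D: "((\<lambda>x. (of_int c * mixed a1 b1 K (if \<not>u1 then x else s) (if \<not>v1 then x else s))
       * mixed a2 b2 P (if \<not>u2 then x else s) (if \<not>v2 then x else s)) has_vector_derivative
     (of_int c * mixed a1 b1 K (if \<not>u1 then t else s) (if \<not>v1 then t else s)) *
       ((if \<not>u2 then mixed (Suc a2) b2 P (if \<not>u2 then t else s) (if \<not>v2 then t else s) else 0) +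
        (if \<not>v2 then mixed a2 (Suc b2) P (if \<not>u2 then t else s) (if \<not>v2 then t else s) else 0))
     + (of_int c * ((if \<not>u1 then mixed (Suc a1) b1 K (if \<not>u1 then t else s) (if \<not>v1 then t else s) else 0) +
        (if \<not>v1 then mixed a1 (Suc b1) K (if \<not>u1 then t else s) (if \<not>v1 then t else s) else 0)))
       * mixed a2 b2 P (if \<not>u2 then t else s) (if \<not>v2 then t else s)) (at t within Ivl)"
    by (rule has_vector_derivative_mult[OF has_vector_derivative_mult_right[OF A] B]) (use i1 i2 in auto)
  show ?thesis
    using D by (cases u1; cases v1; cases u2; cases v2) (simp_all add: sel_def algebra_simps)
qed



lemma cont2:
  assumes F: "continuous_on (Ivl \<times> Ivl) (\<lambda>p. F (fst p) (snd p))"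
    and g1: "continuous_on S g1" and g2: "continuous_on S g2"
    and r: "\<And>z. z \<in> S \<Longrightarrow> g1 z \<in> Ivl" "\<And>z. z \<in> S \<Longrightarrow> g2 z \<in> Ivl"
  shows "continuous_on S (\<lambda>z. F (g1 z) (g2 z))"
  by (rule continuous_on_compose2[OF F, where f="\<lambda>z. (g1 z, g2 z)", simplified])
     (use g1 g2 r in \<open>auto intro!: continuous_intros\<close>)

lemma IT_deriv_s:
  assumes K: "Cm m K" and P: "Cm m P" and v: "validm p q (IT c a b)"
    and pq: "p < m" "q \<le> m" and s: "s \<in> Ivl" and t: "t \<in> Ivl"
  shows "((\<lambda>s'. evm K P (IT c a b) s' t) has_vector_derivative
          evl K P (dm True (IT c a b)) s t) (at s within Ivl)"
proof -
  have ab: "a < m" "b \<le> m" using v pq by auto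
  define G where "G = (\<lambda>z x. mixed a 0 K z x * mixed 0 b P x t)"
  define Gd where "Gd = (\<lambda>z x. mixed (Suc a) 0 K z x * mixed 0 b P x t)"
  have Gc: "continuous_on (Ivl \<times> Ivl) (\<lambda>p. G (fst p) (snd p))" unfolding G_def
    by (intro continuous_intros cont2[OF Cm_C[OF K]] cont2[OF Cm_C[OF P]]) (use ab t in auto)
  have Gdc: "continuous_on (Ivl \<times> Ivl) (\<lambda>p. Gd (fst p) (snd p))" unfolding Gd_def
    by (intro continuous_intros cont2[OF Cm_C[OF K]] cont2[OF Cm_C[OF P]]) (use ab t in auto)
  have Gz: "((\<lambda>z'. G z' x) has_vector_derivative Gd z x) (at z within Ivl)" if "z \<in> Ivl" "x \<in> Ivl" for z x
    unfolding G_def Gd_def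
    by (rule has_vector_derivative_mult_left, rule Cm_D2[OF K]) (use ab that in auto)
  have "((\<lambda>z'. of_int c * oint t z' (G z')) has_vector_derivative of_int c * (G s s + oint t s (Gd s))) (at s within Ivl)"
    by (rule has_vector_derivative_mult_right, rule var_limit[OF Gc Gz Gdc t s])
  thus ?thesis by (simp add: G_def Gd_def sel_def algebra_simps)
qed

lemma IT_deriv_t:
  assumes K: "Cm m K" and P: "Cm m P" and v: "validm p q (IT c a b)"
    and pq: "p \<le> m" "q < m" and s: "s \<in> Ivl" and t: "t \<in> Ivl"
  shows "((\<lambda>t'. evm K P (IT c a b) s t') has_vector_derivative
          evl K P (dm False (IT c a b)) s t) (at t within Ivl)"
proof -
  have ab: "a \<le> m" "b < m" using v pq by auto
  define G where "G = (\<lambda>z x. mixed a 0 K s x * mixed 0 b P x z)"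
  define Gd where "Gd = (\<lambda>z x. mixed a 0 K s x * mixed 0 (Suc b) P x z)"
  have Gc: "continuous_on (Ivl \<times> Ivl) (\<lambda>p. G (fst p) (snd p))" unfolding G_def
    by (intro continuous_intros cont2[OF Cm_C[OF K]] cont2[OF Cm_C[OF P]]) (use ab s in auto)
  have Gdc: "continuous_on (Ivl \<times> Ivl) (\<lambda>p. Gd (fst p) (snd p))" unfolding Gd_def
    by (intro continuous_intros cont2[OF Cm_C[OF K]] cont2[OF Cm_C[OF P]]) (use ab s in auto)
  have Gz: "((\<lambda>z'. G z' x) has_vector_derivative Gd z x) (at z within Ivl)" if "z \<in> Ivl" "x \<in> Ivl" for z x
    unfolding G_def Gd_def
    by (rule has_vector_derivative_mult_right, rule Cm_schwarz[OF P]) (use ab that in auto)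
  have "((\<lambda>z'. of_int c * oint z' s (G z')) has_vector_derivative of_int c * (- G t t + oint t s (Gd t))) (at t within Ivl)"
    by (rule has_vector_derivative_mult_right, rule var_limit2[OF Gc Gz Gdc s t])
  thus ?thesis by (simp add: G_def Gd_def sel_def algebra_simps)
qed

lemma evm_deriv_s:
  assumes "Cm m K" "Cm m P" "validm p q mo" "p < m" "q \<le> m" "s \<in> Ivl" "t \<in> Ivl"
  shows "((\<lambda>s'. evm K P mo s' t) has_vector_derivative evl K P (dm True mo) s t) (at s within Ivl)"
  using assms by (cases mo) (blast intro: KP_deriv_s IT_deriv_s)+

lemma evm_deriv_t:
  assumes "Cm m K" "Cm m P" "validm p q mo" "p \<le> m" "q < m" "s \<in> Ivl" "t \<in> Ivl"
  shows "((\<lambda>t'. evm K P mo s t') has_vector_derivative evl K P (dm False mo) s t) (at t within Ivl)"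
  using assms by (cases mo) (blast intro: KP_deriv_t IT_deriv_t)+

lemma evl_deriv_s:
  assumes "Cm m K" "Cm m P" "\<forall>mo\<in>set es. validm p q mo" "p < m" "q \<le> m" "s \<in> Ivl" "t \<in> Ivl"
  shows "((\<lambda>s'. evl K P es s' t) has_vector_derivative evl K P (dl True es) s t) (at s within Ivl)"
  using assms(3) 
proof (induction es)
  case Nil thus ?case by simp
next
  case (Cons mo es)
  thus ?case using evm_deriv_s[OF assms(1,2) _ assms(4-7), of mo]
    by (auto intro!: has_vector_derivative_add)
qed

lemma evl_deriv_t:
  assumes "Cm m K" "Cm m P" "\<forall>mo\<in>set es. validm p q mo" "p \<le> m" "q < m" "s \<in> Ivl" "t \<in> Ivl"
  shows "((\<lambda>t'. evl K P es s t') has_vector_derivative evl K P (dl False es) s t) (at t within Ivl)"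
  using assms(3) 
proof (induction es)
  case Nil thus ?case by simp
next
  case (Cons mo es)
  thus ?case using evm_deriv_t[OF assms(1,2) _ assms(4-7), of mo]
    by (auto intro!: has_vector_derivative_add)
qed



lemma sel_cont: "continuous_on S (\<lambda>z. sel u (fst z) (snd z))"
  by (cases u) (auto simp: sel_def intro: continuous_intros)
lemma sel_Ivl: "z \<in> Ivl \<times> Ivl \<Longrightarrow> sel u (fst z) (snd z) \<in> Ivl"
  by (cases u) (auto simp: sel_def)

lemma evm_cont:
  assumes K: "Cm m K" and P: "Cm m P" and v: "validm p q mo" and pq: "p \<le> m" "q \<le> m"
  shows "continuous_on (Ivl \<times> Ivl) (\<lambda>z. evm K P mo (fst z) (snd z))"
proof (cases mo)
  case (KP c a1 b1 u1 v1 a2 b2 u2 v2)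
  have i1: "a1 \<le> m \<and> b1 \<le> m" using v pq KP by (intro idx_c[of u1 v1 a1 b1 p q]) auto
  have i2: "a2 \<le> m \<and> b2 \<le> m" using v pq KP by (intro idx_c[of u2 v2 a2 b2 p q]) auto
  show ?thesis unfolding KP evm.simps
    by (intro continuous_intros cont2[OF Cm_C[OF K]] cont2[OF Cm_C[OF P]] sel_cont sel_Ivl)
       (use i1 i2 in auto)
next
  case (IT c a b)
  have ab: "a \<le> m" "b \<le> m" using v pq IT by auto
  show ?thesis unfolding IT evm.simps
    by (intro continuous_intros IT_cont Cm_C[OF K] Cm_C[OF P]) (use ab in auto)
qed

lemma evl_cont:
  assumes K: "Cm m K" and P: "Cm m P" and v: "\<forall>mo\<in>set es. validm p q mo" and pq: "p \<le> m" "q \<le> m"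
  shows "continuous_on (Ivl \<times> Ivl) (\<lambda>z. evl K P es (fst z) (snd z))"
  using v
proof (induction es)
  case Nil thus ?case by simp
next
  case (Cons mo es)
  thus ?case using evm_cont[OF K P _ pq, of mo] by (auto intro!: continuous_intros)
qed

fun cabs :: "mono \<Rightarrow> real" where
  "cabs (KP c a1 b1 u1 v1 a2 b2 u2 v2) = real_of_int \<bar>c\<bar>"
| "cabs (IT c a b) = real_of_int \<bar>c\<bar>"

definition wt :: "mono list \<Rightarrow> real" where "wt es = (\<Sum>mo\<leftarrow>es. cabs mo)"

lemma wt_nonneg: "0 \<le> wt es"
proof -
  have "\<And>mo. 0 \<le> cabs mo" by (case_tac mo) auto
  thus ?thesis unfolding wt_def by (induction es) auto
qed

lemma evm_bound:
  assumes K: "Cm m K" and P: "Cm m P" and v: "validm p q mo" and pq: "p \<le> m" "q \<le> m"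
    and BK: "\<And>i j s t. i \<le> m \<Longrightarrow> j \<le> m \<Longrightarrow> s \<in> Ivl \<Longrightarrow> t \<in> Ivl \<Longrightarrow> norm (mixed i j K s t) \<le> BK"
    and BP: "\<And>i j s t. i \<le> m \<Longrightarrow> j \<le> m \<Longrightarrow> s \<in> Ivl \<Longrightarrow> t \<in> Ivl \<Longrightarrow> norm (mixed i j P s t) \<le> BP"
    and B0: "0 \<le> BK" "0 \<le> BP"
    and s: "s \<in> Ivl" and t: "t \<in> Ivl"
  shows "norm (evm K P mo s t) \<le> 2 * cabs mo * BK * BP"
proof (cases mo)
  case (KP c a1 b1 u1 v1 a2 b2 u2 v2)
  have i1: "a1 \<le> m \<and> b1 \<le> m" using v pq KP by (intro idx_c[of u1 v1 a1 b1 p q]) auto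
  have i2: "a2 \<le> m \<and> b2 \<le> m" using v pq KP by (intro idx_c[of u2 v2 a2 b2 p q]) auto
  have si: "sel u s t \<in> Ivl" for u using s t by (simp add: sel_def)
  have "norm (evm K P mo s t) = \<bar>real_of_int c\<bar> * norm (mixed a1 b1 K (sel u1 s t) (sel v1 s t))
      * norm (mixed a2 b2 P (sel u2 s t) (sel v2 s t))"
    by (simp add: KP norm_mult)
  also have "\<dots> \<le> \<bar>real_of_int c\<bar> * BK * BP"
    by (intro mult_mono mult_left_mono BK BP) (use i1 i2 si B0 in auto)
  also have "\<dots> \<le> 2 * cabs mo * BK * BP" using B0 by (simp add: KP mult_nonneg_nonneg)
  finally show ?thesis .
next
  case (IT c a b)
  have ab: "a \<le> m" "b \<le> m" using v pq IT by auto
  have fc: "continuous_on Ivl (\<lambda>x. mixed a 0 K s x * mixed 0 b P x t)"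
    by (intro continuous_intros cont2[OF Cm_C[OF K]] cont2[OF Cm_C[OF P]]) (use ab s t in auto)
  have "norm (oint t s (\<lambda>x. mixed a 0 K s x * mixed 0 b P x t)) \<le> (BK * BP) * \<bar>s - t\<bar>"
    by (rule oint_bound[OF t s fc]) (use ab s t in \<open>auto simp: norm_mult intro!: mult_mono BK BP B0\<close>)
  also have "\<dots> \<le> (BK * BP) * 2" using s t B0 by (intro mult_left_mono) auto
  finally have "norm (oint t s (\<lambda>x. mixed a 0 K s x * mixed 0 b P x t)) \<le> BK * BP * 2" .
  hence "\<bar>real_of_int c\<bar> * norm (oint t s (\<lambda>x. mixed a 0 K s x * mixed 0 b P x t)) \<le> \<bar>real_of_int c\<bar> * (BK * BP * 2)"
    by (intro mult_left_mono) auto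
  thus ?thesis by (simp add: IT norm_mult algebra_simps)
qed

lemma evl_bound:
  assumes K: "Cm m K" and P: "Cm m P" and v: "\<forall>mo\<in>set es. validm p q mo" and pq: "p \<le> m" "q \<le> m"
    and BK: "\<And>i j s t. i \<le> m \<Longrightarrow> j \<le> m \<Longrightarrow> s \<in> Ivl \<Longrightarrow> t \<in> Ivl \<Longrightarrow> norm (mixed i j K s t) \<le> BK"
    and BP: "\<And>i j s t. i \<le> m \<Longrightarrow> j \<le> m \<Longrightarrow> s \<in> Ivl \<Longrightarrow> t \<in> Ivl \<Longrightarrow> norm (mixed i j P s t) \<le> BP"
    and B0: "0 \<le> BK" "0 \<le> BP"
    and s: "s \<in> Ivl" and t: "t \<in> Ivl"
  shows "norm (evl K P es s t) \<le> 2 * wt es * BK * BP"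
  using v
proof (induction es)
  case Nil thus ?case by (simp add: wt_def)
next
  case (Cons mo es)
  have "norm (evl K P (mo # es) s t) \<le> norm (evm K P mo s t) + norm (evl K P es s t)"
    by (simp add: norm_triangle_ineq)
  also have "\<dots> \<le> 2 * cabs mo * BK * BP + 2 * wt es * BK * BP"
    using Cons evm_bound[OF K P _ pq BK BP B0 s t, of mo] by (intro add_mono) auto
  finally show ?case by (simp add: wt_def algebra_simps)
qed

lemma evm_diag:
  assumes v: "validm p q mo" and pq: "p \<le> m" "q \<le> m" "p + q \<le> N"
    and BK: "\<And>i j s t. i \<le> m \<Longrightarrow> j \<le> m \<Longrightarrow> s \<in> Ivl \<Longrightarrow> t \<in> Ivl \<Longrightarrow> norm (mixed i j K s t) \<le> BK"
    and BK0: "0 \<le> BK" and cd0: "0 \<le> cd" and kap: "\<kappa> > 1"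
    and D: "\<And>i j s. i + j + 1 \<le> N \<Longrightarrow> s \<in> Ivl \<Longrightarrow>
        norm (mixed i j P s s) \<le> cd * \<kappa> powr (- (real N - real i - real j - 1))"
    and s: "s \<in> Ivl"
  shows "norm (evm K P mo s s) \<le> cabs mo * BK * cd * \<kappa> powr (- (real N - real p - real q))"
proof (cases mo)
  case (KP c a1 b1 u1 v1 a2 b2 u2 v2)
  have i1: "a1 \<le> m \<and> b1 \<le> m" using v pq KP by (intro idx_c[of u1 v1 a1 b1 p q]) auto
  have o2: "a2 + b2 + 1 \<le> p + q" using v KP by auto
  have si: "sel u s s = s" for u by (simp add: sel_def)
  have "norm (mixed a2 b2 P s s) \<le> cd * \<kappa> powr (- (real N - real a2 - real b2 - 1))"
    using D[OF _ s, of a2 b2] o2 pq by auto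
  also have "\<dots> \<le> cd * \<kappa> powr (- (real N - real p - real q))"
  proof (intro mult_left_mono cd0 powr_mono)
    have "real a2 + real b2 + 1 \<le> real p + real q" using o2 by linarith
    thus "- (real N - real a2 - real b2 - 1) \<le> - (real N - real p - real q)" by linarith
  qed (use kap in auto)
  finally have Pb: "norm (mixed a2 b2 P s s) \<le> cd * \<kappa> powr (- (real N - real p - real q))" .
  have "norm (evm K P mo s s) = \<bar>real_of_int c\<bar> * norm (mixed a1 b1 K s s) * norm (mixed a2 b2 P s s)"
    by (simp add: KP norm_mult si)
  also have "\<dots> \<le> \<bar>real_of_int c\<bar> * BK * (cd * \<kappa> powr (- (real N - real p - real q)))"
    by (intro mult_mono mult_left_mono BK Pb) (use i1 s BK0 in auto)
  finally show ?thesis by (simp add: KP algebra_simps)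
next
  case (IT c a b)
  have "0 \<le> cabs mo * BK * cd * \<kappa> powr (- (real N - real p - real q))"
    using BK0 cd0 by (simp add: IT)
  thus ?thesis by (simp add: IT oint_same)
qed

lemma evl_diag:
  assumes v: "\<forall>mo\<in>set es. validm p q mo" and pq: "p \<le> m" "q \<le> m" "p + q \<le> N"
    and BK: "\<And>i j s t. i \<le> m \<Longrightarrow> j \<le> m \<Longrightarrow> s \<in> Ivl \<Longrightarrow> t \<in> Ivl \<Longrightarrow> norm (mixed i j K s t) \<le> BK"
    and BK0: "0 \<le> BK" and cd0: "0 \<le> cd" and kap: "\<kappa> > 1"
    and D: "\<And>i j s. i + j + 1 \<le> N \<Longrightarrow> s \<in> Ivl \<Longrightarrow>
        norm (mixed i j P s s) \<le> cd * \<kappa> powr (- (real N - real i - real j - 1))"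
    and s: "s \<in> Ivl"
  shows "norm (evl K P es s s) \<le> wt es * BK * cd * \<kappa> powr (- (real N - real p - real q))"
  using v
proof (induction es)
  case Nil thus ?case by (simp add: wt_def)
next
  case (Cons mo es)
  have "norm (evl K P (mo # es) s s) \<le> norm (evm K P mo s s) + norm (evl K P es s s)"
    by (simp add: norm_triangle_ineq)
  also have "\<dots> \<le> cabs mo * BK * cd * \<kappa> powr (- (real N - real p - real q))
       + wt es * BK * cd * \<kappa> powr (- (real N - real p - real q))"
    using Cons evm_diag[OF _ pq BK BK0 cd0 kap D s, of mo] by (intro add_mono) auto
  finally show ?case by (simp add: wt_def algebra_simps)
qed



lemma valid_dl_s: "\<forall>mo\<in>set es. validm p q mo \<Longrightarrow> \<forall>mo\<in>set (dl True es). validm (Suc p) q mo"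
  by (auto simp: dl_def intro: valid_dm_s)
lemma valid_dl_t: "\<forall>mo\<in>set es. validm p q mo \<Longrightarrow> \<forall>mo\<in>set (dl False es). validm p (Suc q) mo"
  by (auto simp: dl_def intro: valid_dm_t)

lemma valid_it_t: "\<forall>mo\<in>set es. validm p 0 mo \<Longrightarrow> \<forall>mo\<in>set ((dl False ^^ b) es). validm p b mo"
  by (induction b) (auto dest: valid_dl_t)
lemma valid_it_s: "\<forall>mo\<in>set es. validm 0 q mo \<Longrightarrow> \<forall>mo\<in>set ((dl True ^^ a) es). validm a q mo"
  by (induction a) (auto dest: valid_dl_s)

definition ExD :: "mono list \<Rightarrow> nat \<Rightarrow> nat \<Rightarrow> mono list" where
  "ExD es a b = (dl True ^^ a) ((dl False ^^ b) es)"

lemma valid_Ex: "\<forall>mo\<in>set es. validm 0 0 mo \<Longrightarrow> \<forall>mo\<in>set (ExD es a b). validm a b mo"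
  unfolding ExD_def by (intro valid_it_s valid_it_t)

lemma vd_eq:
  fixes f g :: "real \<Rightarrow> complex"
  assumes "x \<in> Ivl" "\<And>y. y \<in> Ivl \<Longrightarrow> g y = f y" "(f has_vector_derivative d) (at x within Ivl)"
  shows "vector_derivative g (at x within Ivl) = d"
    and "(g has_vector_derivative d) (at x within Ivl)"
proof -
  show g: "(g has_vector_derivative d) (at x within Ivl)"
    by (rule has_vector_derivative_transform[OF assms(1,2,3)])
  show "vector_derivative g (at x within Ivl) = d"
    using vector_derivative_within_closed_interval[of "-1" 1 x g d] g assms(1) by simp
qed

lemma J_T:
  assumes K: "Cm m K" and P: "Cm m P" and v: "\<forall>mo\<in>set es. validm 0 0 mo"
  shows "b \<le> m \<Longrightarrow> s \<in> Ivl \<Longrightarrow> t \<in> Ivl \<Longrightarrow> dt b (evl K P es) s t = evl K P ((dl False ^^ b) es) s t"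
proof (induction b arbitrary: s t)
  case 0 thus ?case by simp
next
  case (Suc b)
  have vb: "\<forall>mo\<in>set ((dl False ^^ b) es). validm 0 b mo" using valid_it_t v by blast
  have "vector_derivative (\<lambda>t'. dt b (evl K P es) s t') (at t within Ivl)
      = evl K P (dl False ((dl False ^^ b) es)) s t"
    by (rule vd_eq(1)[OF Suc.prems(3) _ evl_deriv_t[OF K P vb]]) (use Suc in auto)
  thus ?case by simp
qed

lemma J_S:
  assumes K: "Cm m K" and P: "Cm m P" and v: "\<forall>mo\<in>set es. validm 0 0 mo" and b: "b \<le> m"
  shows "a \<le> m \<Longrightarrow> s \<in> Ivl \<Longrightarrow> t \<in> Ivl \<Longrightarrow> mixed a b (evl K P es) s t = evl K P (ExD es a b) s t"
proof (induction a arbitrary: s t)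
  case 0 thus ?case using J_T[OF K P v b] by (simp add: mixed_def ExD_def)
next
  case (Suc a)
  have va: "\<forall>mo\<in>set (ExD es a b). validm a b mo" using valid_Ex v by blast
  have "vector_derivative (\<lambda>s'. mixed a b (evl K P es) s' t) (at s within Ivl)
      = evl K P (dl True (ExD es a b)) s t"
    by (rule vd_eq(1)[OF Suc.prems(2) _ evl_deriv_s[OF K P va]]) (use Suc b in auto)
  thus ?case by (simp add: mixed_def ExD_def)
qed

lemma J_Cm:
  assumes K: "Cm m K" and P: "Cm m P" and v: "\<forall>mo\<in>set es. validm 0 0 mo"
  shows "Cm m (evl K P es)"
  unfolding Cm_def
proof (intro conjI allI impI ballI)
  fix b s t assume b: "b < m" and s: "s \<in> Ivl" and t: "t \<in> Ivl"
  have vb: "\<forall>mo\<in>set ((dl False ^^ b) es). validm 0 b mo" using valid_it_t v by blast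
  have "((\<lambda>t'. dt b (evl K P es) s t') has_vector_derivative evl K P (dl False ((dl False ^^ b) es)) s t)
      (at t within Ivl)"
    by (rule vd_eq(2)[OF t _ evl_deriv_t[OF K P vb]]) (use J_T[OF K P v] b s t in auto)
  moreover have "dt (Suc b) (evl K P es) s t = evl K P (dl False ((dl False ^^ b) es)) s t"
    using J_T[OF K P v, of "Suc b"] b s t by simp
  ultimately show "((\<lambda>t'. dt b (evl K P es) s t') has_vector_derivative dt (Suc b) (evl K P es) s t)
      (at t within Ivl)" by simp
next
  fix a b s t assume a: "a < m" and b: "b \<le> m" and s: "s \<in> Ivl" and t: "t \<in> Ivl"
  have va: "\<forall>mo\<in>set (ExD es a b). validm a b mo" using valid_Ex v by blast
  have "((\<lambda>s'. mixed a b (evl K P es) s' t) has_vector_derivative evl K P (dl True (ExD es a b)) s t)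
      (at s within Ivl)"
    by (rule vd_eq(2)[OF s _ evl_deriv_s[OF K P va]]) (use J_S[OF K P v] a b s t in auto)
  moreover have "mixed (Suc a) b (evl K P es) s t = evl K P (dl True (ExD es a b)) s t"
    using J_S[OF K P v b, of "Suc a"] a s t by (simp add: ExD_def)
  ultimately show "((\<lambda>s'. mixed a b (evl K P es) s' t) has_vector_derivative mixed (Suc a) b (evl K P es) s t)
      (at s within Ivl)" by simp
next
  fix a b assume a: "a \<le> m" and b: "b \<le> m"
  have va: "\<forall>mo\<in>set (ExD es a b). validm a b mo" using valid_Ex v by blast
  have "continuous_on (Ivl \<times> Ivl) (\<lambda>z. evl K P (ExD es a b) (fst z) (snd z))"
    by (rule evl_cont[OF K P va a b])
  moreover have "\<And>z. z \<in> Ivl \<times> Ivl \<Longrightarrow> mixed a b (evl K P es) (fst z) (snd z) = evl K P (ExD es a b) (fst z) (snd z)"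
    using J_S[OF K P v b a] by auto
  ultimately show "continuous_on (Ivl \<times> Ivl) (\<lambda>p. mixed a b (evl K P es) (fst p) (snd p))"
    using continuous_on_eq by (metis (no_types, lifting))
qed

lemma Cm_bound:
  assumes K: "Cm m K"
  shows "\<exists>BK\<ge>0. \<forall>i j s t. i \<le> m \<longrightarrow> j \<le> m \<longrightarrow> s \<in> Ivl \<longrightarrow> t \<in> Ivl \<longrightarrow> norm (mixed i j K s t) \<le> BK"
proof -
  have "\<forall>i j. \<exists>M. i \<le> m \<longrightarrow> j \<le> m \<longrightarrow> (M \<ge> 0 \<and> (\<forall>s\<in>Ivl. \<forall>t\<in>Ivl. norm (mixed i j K s t) \<le> M))"
    using cont_bounded[OF Cm_C[OF K]] by blast
  then obtain B where B: "\<And>i j. i \<le> m \<Longrightarrow> j \<le> m \<Longrightarrow> B i j \<ge> 0 \<and> (\<forall>s\<in>Ivl. \<forall>t\<in>Ivl. norm (mixed i j K s t) \<le> B i j)"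
    by metis
  define BK where "BK = (\<Sum>i\<le>m. \<Sum>j\<le>m. B i j)"
  have le: "B i j \<le> BK" if "i \<le> m" "j \<le> m" for i j
  proof -
    have "B i j \<le> (\<Sum>j\<le>m. B i j)"
      by (rule member_le_sum) (use B that in auto)
    also have "\<dots> \<le> BK" unfolding BK_def
      by (rule member_le_sum[where f="\<lambda>i. \<Sum>j\<le>m. B i j"]) (use B that in \<open>auto intro: sum_nonneg\<close>)
    finally show ?thesis .
  qed
  have "BK \<ge> 0" unfolding BK_def using B by (auto intro!: sum_nonneg)
  thus ?thesis using B le by (meson order_trans)
qed

lemma sum2_le:
  fixes w :: "nat \<Rightarrow> nat \<Rightarrow> real"
  assumes "\<And>i j. 0 \<le> w i j" "a \<le> m" "b \<le> m"
  shows "w a b \<le> (\<Sum>i\<le>m. \<Sum>j\<le>m. w i j)"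
proof -
  have "w a b \<le> (\<Sum>j\<le>m. w a j)" by (rule member_le_sum) (use assms in auto)
  also have "\<dots> \<le> (\<Sum>i\<le>m. \<Sum>j\<le>m. w i j)"
    by (rule member_le_sum[where f="\<lambda>i. \<Sum>j\<le>m. w i j"]) (use assms in \<open>auto intro: sum_nonneg\<close>)
  finally show ?thesis .
qed

lemma main_gen:
  assumes n: "1 < n" "n \<le> m" and K: "Cm m K"
    and Ph: "less_osc m (n - 1) Pf"
    and v: "\<forall>mo\<in>set es. validm 0 0 mo"
  shows "less_osc m n (\<lambda>\<kappa>. evl K (Pf \<kappa>) es)"
proof -
  from Ph obtain cP \<kappa>0 cd where PC: "\<And>\<kappa>. \<kappa> > 1 \<Longrightarrow> Cm m (Pf \<kappa>)"
    and cP: "cP > 0" and k0: "\<kappa>0 > 0"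
    and PB: "\<And>\<kappa> a b s t. \<kappa> > 1 \<Longrightarrow> \<kappa> \<ge> \<kappa>0 \<Longrightarrow> a \<le> m \<Longrightarrow> b \<le> m \<Longrightarrow> s \<in> Ivl \<Longrightarrow> t \<in> Ivl \<Longrightarrow>
        norm (mixed a b (Pf \<kappa>) s t) \<le> cP"
    and cd: "cd > 0"
    and PD: "\<And>\<kappa> a b s. \<kappa> > 1 \<Longrightarrow> a + b + 1 \<le> n - 1 \<Longrightarrow> s \<in> Ivl \<Longrightarrow>
        norm (mixed a b (Pf \<kappa>) s s) \<le> cd * \<kappa> powr (- (real (n - 1) - real a - real b - 1))"
    unfolding less_osc_def Cmk0_def by metis
  obtain BK where BK0: "BK \<ge> 0" and BK: "\<And>i j s t. i \<le> m \<Longrightarrow> j \<le> m \<Longrightarrow> s \<in> Ivl \<Longrightarrow> t \<in> Ivl \<Longrightarrow>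
      norm (mixed i j K s t) \<le> BK" using Cm_bound[OF K] by blast
  define W where "W = (\<Sum>i\<le>m. \<Sum>j\<le>m. wt (ExD es i j))"
  have W: "wt (ExD es a b) \<le> W" if "a \<le> m" "b \<le> m" for a b
    unfolding W_def by (rule sum2_le[where w="\<lambda>i j. wt (ExD es i j)"]) (use that wt_nonneg in auto)
  have W0: "0 \<le> W" using W[of 0 0] wt_nonneg[of "ExD es 0 0"] by simp
  have C1a: "\<forall>\<kappa>>1. Cm m (evl K (Pf \<kappa>) es)" using J_Cm[OF K PC v] by blast
  have C1b: "\<forall>\<kappa>. 1 < \<kappa> \<and> \<kappa>0 \<le> \<kappa> \<longrightarrow> (\<forall>a\<le>m. \<forall>b\<le>m. \<forall>s\<in>Ivl. \<forall>t\<in>Ivl.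
      norm (mixed a b (evl K (Pf \<kappa>) es) s t) \<le> 2 * W * BK * cP + 1)"
  proof (intro allI impI ballI)
    fix \<kappa> :: real and a b s t assume kk: "1 < \<kappa> \<and> \<kappa>0 \<le> \<kappa>" and a: "a \<le> m" and b: "b \<le> m"
      and s: "s \<in> Ivl" and t: "t \<in> Ivl"
    have va: "\<forall>mo\<in>set (ExD es a b). validm a b mo" using valid_Ex v by blast
    have "mixed a b (evl K (Pf \<kappa>) es) s t = evl K (Pf \<kappa>) (ExD es a b) s t"
      using J_S[OF K PC[of \<kappa>] v b a s t] kk by simp
    also have "norm \<dots> \<le> 2 * wt (ExD es a b) * BK * cP"
      by (rule evl_bound[OF K PC va a b BK PB BK0 _ s t]) (use kk cP in auto)
    also have "\<dots> \<le> 2 * W * BK * cP"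
      using W[OF a b] BK0 cP by (intro mult_right_mono) auto
    finally show "norm (mixed a b (evl K (Pf \<kappa>) es) s t) \<le> 2 * W * BK * cP + 1" by simp
  qed
  have pos: "0 < 2 * W * BK * cP + 1" using W0 BK0 cP by (simp add: add_nonneg_pos)
  have C1: "Cmk0 m (\<lambda>\<kappa>. evl K (Pf \<kappa>) es)"
    unfolding Cmk0_def using C1a C1b pos k0 by blast
  have C2: "\<exists>c0>0. \<forall>\<kappa>>1. \<forall>a b. a + b + 1 \<le> n \<longrightarrow>
        (\<forall>s\<in>Ivl. norm (mixed a b (evl K (Pf \<kappa>) es) s s)
                    \<le> c0 * \<kappa> powr (- (real n - real a - real b - 1)))"
  proof (intro exI[of _ "W * BK * cd + 1"] conjI allI impI ballI)
    show "0 < W * BK * cd + 1" using W0 BK0 cd by (simp add: add_nonneg_pos)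
  next
    fix \<kappa> :: real and a b s assume kk: "1 < \<kappa>" and ab: "a + b + 1 \<le> n" and s: "s \<in> Ivl"
    have a: "a \<le> m" and b: "b \<le> m" using ab n by auto
    have va: "\<forall>mo\<in>set (ExD es a b). validm a b mo" using valid_Ex v by blast
    have "mixed a b (evl K (Pf \<kappa>) es) s s = evl K (Pf \<kappa>) (ExD es a b) s s"
      using J_S[OF K PC[of \<kappa>] v b a s s] kk by simp
    also have "norm \<dots> \<le> wt (ExD es a b) * BK * cd * \<kappa> powr (- (real (n - 1) - real a - real b))"
      by (rule evl_diag[OF va a b _ BK BK0 _ kk _ s]) (use ab cd PD kk in auto)
    also have "\<dots> \<le> (W * BK * cd + 1) * \<kappa> powr (- (real n - real a - real b - 1))"
    proof -
      have e: "real (n - 1) = real n - 1" using n by simp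
      have "wt (ExD es a b) * BK * cd \<le> W * BK * cd + 1"
      proof -
        have "wt (ExD es a b) * BK * cd \<le> W * BK * cd"
          using W[OF a b] BK0 cd by (intro mult_right_mono) auto
        thus ?thesis by simp
      qed
      moreover have "- (real (n - 1) - real a - real b) = - (real n - real a - real b - 1)" using e by simp
      ultimately show ?thesis by (metis mult_right_mono powr_ge_zero)
    qed
    finally show "norm (mixed a b (evl K (Pf \<kappa>) es) s s) \<le> (W * BK * cd + 1) * \<kappa> powr (- (real n - real a - real b - 1))" .
  qed
  show ?thesis unfolding less_osc_def using C1 C2 by blast
qed

lemma Jfun_evl: "Jfun K P e = evl K P [IT ((-1)^(e-1)) 0 0]"
proof (intro ext)
  fix s t
  have "Lfun K P s t = (\<lambda>x. K s x * P x t)" by (intro ext) (simp add: Lfun_def)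
  thus "Jfun K P e s t = evl K P [IT ((-1)^(e-1)) 0 0] s t"
    by (simp add: Jfun_def evl_def mixed_00)
qed

theorem lemma5p3:
  fixes m n :: nat and K :: kern
  assumes "0 < m" and "1 < n" and "n \<le> m"
    and "Cm m K"
    and "less_osc m (n - 1) (\<lambda>\<kappa>. Kn K m \<kappa> (n - 1) 1)"
    and "less_osc m (n - 1) (\<lambda>\<kappa>. Kn K m \<kappa> (n - 1) 2)"
  shows "less_osc m n (\<lambda>\<kappa>. Jfun K (Kn K m \<kappa> (n - 1) 1) 1)
       \<and> less_osc m n (\<lambda>\<kappa>. Jfun K (Kn K m \<kappa> (n - 1) 2) 2)"
proof
  show "less_osc m n (\<lambda>\<kappa>. Jfun K (Kn K m \<kappa> (n - 1) 1) 1)"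
    unfolding Jfun_evl by (rule main_gen[OF assms(2,3,4,5)]) simp
  show "less_osc m n (\<lambda>\<kappa>. Jfun K (Kn K m \<kappa> (n - 1) 2) 2)"
    unfolding Jfun_evl by (rule main_gen[OF assms(2,3,4,6)]) simp
qed

end
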